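(* Let $F$ be an imaginary cyclic sextic field with maximal real subfield $K$. If $O_K$ has a prime ideal of norm $2$ and $\epsilon\in O_F^\times$ satisfies $\|\epsilon\|^2<81$, then $\epsilon\in\mu_F$.
   Context: $F$ is a totally imaginary number field Galois over $\mathbb{Q}$ with cyclic Galois group $\langle\tau\rangle$ of order 6; $K$ is its cyclic cubic subfield; $\mu_F$ is the group of roots of unity of $F$. With the embeddings $\tau_1=\mathrm{id},\tau_2=\tau,\tau_3=\tau^2$, $\|f\|^2=2\sum_{i=1}^3|\tau_i(f)|^2$. *)

theory Defs
  imports Complex_Main "HOL-Computational_Algebra.Polynomial"
begin

text \<open>Number fields are taken to be subfields of the complex numbers.\<close>

definition is_subfield :: "complex set \<Rightarrow> bool" where
  "is_subfield F \<longleftrightarrow> 0 \<in> F \<and> 1 \<in> F \<and>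
     (\<forall>x\<in>F. \<forall>y\<in>F. x + y \<in> F \<and> x - y \<in> F \<and> x * y \<in> F) \<and>
     (\<forall>x\<in>F. x \<noteq> 0 \<longrightarrow> inverse x \<in> F)"

definition has_degree :: "complex set \<Rightarrow> nat \<Rightarrow> bool" where
  "has_degree F n \<longleftrightarrow> (\<exists>b :: nat \<Rightarrow> complex.
      (\<forall>i<n. b i \<in> F) \<and>
      (\<forall>x\<in>F. \<exists>c :: nat \<Rightarrow> rat. x = (\<Sum>i<n. of_rat (c i) * b i)) \<and>
      (\<forall>c d :: nat \<Rightarrow> rat. (\<Sum>i<n. of_rat (c i) * b i) = (\<Sum>i<n. of_rat (d i) * b i)
          \<longrightarrow> (\<forall>i<n. c i = d i)))"

text \<open>Field embeddings F \<rightarrow> C (only values on F matter).\<close>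
definition embedding_on :: "complex set \<Rightarrow> (complex \<Rightarrow> complex) \<Rightarrow> bool" where
  "embedding_on F \<sigma> \<longleftrightarrow> \<sigma> 1 = 1 \<and>
     (\<forall>x\<in>F. \<forall>y\<in>F. \<sigma> (x + y) = \<sigma> x + \<sigma> y \<and> \<sigma> (x * y) = \<sigma> x * \<sigma> y)"

text \<open>F is a number field, Galois over Q, with cyclic Galois group of order 6
  generated by \<tau>: \<tau> maps F into F, every embedding of F is (on F) a power \<tau>^k,
  and \<tau>^k is not the identity on F for 0 < k < 6.\<close>
definition cyclic_sextic :: "complex set \<Rightarrow> (complex \<Rightarrow> complex) \<Rightarrow> bool" where
  "cyclic_sextic F \<tau> \<longleftrightarrow> is_subfield F \<and> has_degree F 6 \<and>
     embedding_on F \<tau> \<and> \<tau> ` F \<subseteq> F \<and>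
     (\<forall>\<sigma>. embedding_on F \<sigma> \<longrightarrow> (\<exists>k<6. \<forall>x\<in>F. \<sigma> x = (\<tau> ^^ k) x)) \<and>
     (\<forall>k\<in>{1..5}. \<exists>x\<in>F. (\<tau> ^^ k) x \<noteq> x)"

definition totally_imaginary :: "complex set \<Rightarrow> bool" where
  "totally_imaginary F \<longleftrightarrow> (\<forall>\<sigma>. embedding_on F \<sigma> \<longrightarrow> \<not> (\<sigma> ` F \<subseteq> \<real>))"

definition algebraic_integer :: "complex \<Rightarrow> bool" where
  "algebraic_integer x \<longleftrightarrow> (\<exists>p :: int poly. lead_coeff p = 1 \<and> poly (map_poly of_int p) x = 0)"

definition ring_of_integers :: "complex set \<Rightarrow> complex set" where
  "ring_of_integers F = {x \<in> F. algebraic_integer x}"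

definition units_of_integers :: "complex set \<Rightarrow> complex set" where
  "units_of_integers F = {x \<in> ring_of_integers F. x \<noteq> 0 \<and> inverse x \<in> ring_of_integers F}"

definition roots_of_unity :: "complex set \<Rightarrow> complex set" where
  "roots_of_unity F = {x \<in> F. \<exists>n>0. x ^ n = 1}"

definition prime_ideal_in :: "complex set \<Rightarrow> complex set \<Rightarrow> bool" where
  "prime_ideal_in R P \<longleftrightarrow> P \<subseteq> R \<and> 0 \<in> P \<and>
     (\<forall>x\<in>P. \<forall>y\<in>P. x + y \<in> P \<and> x - y \<in> P) \<and>
     (\<forall>r\<in>R. \<forall>x\<in>P. r * x \<in> P) \<and> P \<noteq> R \<and>
     (\<forall>a\<in>R. \<forall>b\<in>R. a * b \<in> P \<longrightarrow> a \<in> P \<or> b \<in> P)"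

definition ideal_norm :: "complex set \<Rightarrow> complex set \<Rightarrow> nat" where
  "ideal_norm R P = card ((\<lambda>x. (\<lambda>y. x + y) ` P) ` R)"

definition sqnorm :: "(complex \<Rightarrow> complex) \<Rightarrow> complex \<Rightarrow> real" where
  "sqnorm \<tau> f = 2 * (\<Sum>i<3. (cmod ((\<tau> ^^ i) f))\<^sup>2)"

end

theory Submission
  imports Defs "Jordan_Normal_Form.Char_Poly"
begin

context fixes F :: "complex set" assumes sf: "is_subfield F"
begin
lemma sf_0: "0 \<in> F" using sf by (simp add: is_subfield_def)
lemma sf_1: "1 \<in> F" using sf by (simp add: is_subfield_def)
lemma sf_add: "x \<in> F \<Longrightarrow> y \<in> F \<Longrightarrow> x + y \<in> F" using sf by (simp add: is_subfield_def)
lemma sf_diff: "x \<in> F \<Longrightarrow> y \<in> F \<Longrightarrow> x - y \<in> F" using sf by (simp add: is_subfield_def)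
lemma sf_mult: "x \<in> F \<Longrightarrow> y \<in> F \<Longrightarrow> x * y \<in> F" using sf by (simp add: is_subfield_def)
lemma sf_uminus: "x \<in> F \<Longrightarrow> - x \<in> F" using sf_diff[OF sf_0, of x] by simp
lemma sf_inverse: "x \<in> F \<Longrightarrow> inverse x \<in> F"
  using sf sf_0 by (cases "x = 0") (auto simp: is_subfield_def)
lemma sf_divide: "x \<in> F \<Longrightarrow> y \<in> F \<Longrightarrow> x / y \<in> F"
  by (simp add: divide_inverse sf_mult sf_inverse)
lemma sf_power: "x \<in> F \<Longrightarrow> x ^ n \<in> F"
  by (induction n) (auto simp: sf_1 sf_mult)
lemma sf_of_nat: "of_nat n \<in> F"
  by (induction n) (auto simp: sf_0 sf_1 sf_add)
lemma sf_of_int: "of_int n \<in> F"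
  by (cases n rule: int_cases) (auto simp: sf_of_nat sf_uminus simp del: of_nat_Suc)
lemma sf_of_rat: "of_rat q \<in> F"
proof -
  obtain a b where "quotient_of q = (a, b)" by (cases "quotient_of q")
  then have "q = of_int a / of_int b" by (rule quotient_of_div)
  then have "(of_rat q :: complex) = of_int a / of_int b" by (simp add: of_rat_divide)
  then show ?thesis by (simp add: sf_divide sf_of_int)
qed
lemma sf_Rats: "x \<in> \<rat> \<Longrightarrow> x \<in> F"
  by (auto simp: Rats_def sf_of_rat)
lemma sf_sum: "(\<And>i. i \<in> A \<Longrightarrow> f i \<in> F) \<Longrightarrow> sum f A \<in> F"
  by (induction A rule: infinite_finite_induct) (auto simp: sf_0 sf_add)
lemma sf_prod: "(\<And>i. i \<in> A \<Longrightarrow> f i \<in> F) \<Longrightarrow> prod f A \<in> F"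
  by (induction A rule: infinite_finite_induct) (auto simp: sf_1 sf_mult)
end

context fixes F :: "complex set" and \<sigma> :: "complex \<Rightarrow> complex"
  assumes sf: "is_subfield F" and emb: "embedding_on F \<sigma>"
begin
lemma emb_1: "\<sigma> 1 = 1" using emb by (simp add: embedding_on_def)
lemma emb_add: "x \<in> F \<Longrightarrow> y \<in> F \<Longrightarrow> \<sigma> (x + y) = \<sigma> x + \<sigma> y" using emb by (simp add: embedding_on_def)
lemma emb_mult: "x \<in> F \<Longrightarrow> y \<in> F \<Longrightarrow> \<sigma> (x * y) = \<sigma> x * \<sigma> y" using emb by (simp add: embedding_on_def)
lemma emb_0: "\<sigma> 0 = 0"
  using emb_add[OF sf_0[OF sf] sf_0[OF sf]] by simp
lemma emb_uminus: "x \<in> F \<Longrightarrow> \<sigma> (- x) = - \<sigma> x"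
  using emb_add[of x "-x"] sf_uminus[OF sf, of x] emb_0 by (simp add: eq_neg_iff_add_eq_0 add.commute)
lemma emb_diff: "x \<in> F \<Longrightarrow> y \<in> F \<Longrightarrow> \<sigma> (x - y) = \<sigma> x - \<sigma> y"
  using emb_add[of x "-y"] emb_uminus[of y] sf_uminus[OF sf, of y] by simp
lemma emb_of_nat: "\<sigma> (of_nat n) = of_nat n"
  by (induction n) (auto simp: emb_0 emb_1 emb_add sf_of_nat[OF sf] sf_1[OF sf])
lemma emb_of_int: "\<sigma> (of_int n) = of_int n"
  by (cases n rule: int_cases) (auto simp: emb_of_nat emb_uminus sf_of_nat[OF sf] simp del: of_nat_Suc)
lemma emb_inverse: "x \<in> F \<Longrightarrow> \<sigma> (inverse x) = inverse (\<sigma> x)"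
proof (cases "x = 0")
  case True then show ?thesis by (simp add: emb_0)
next
  case False
  assume x: "x \<in> F"
  have "\<sigma> x * \<sigma> (inverse x) = 1"
    using emb_mult[OF x sf_inverse[OF sf x]] False emb_1 by simp
  then show ?thesis by (simp add: field_simps inverse_eq_divide)
     (metis divide_self_if mult.commute mult_zero_left nonzero_mult_div_cancel_left zero_neq_one)
qed
lemma emb_nonzero: "x \<in> F \<Longrightarrow> x \<noteq> 0 \<Longrightarrow> \<sigma> x \<noteq> 0"
  using emb_mult[of x "inverse x"] sf_inverse[OF sf, of x] emb_1 by auto
lemma emb_inj: "x \<in> F \<Longrightarrow> y \<in> F \<Longrightarrow> \<sigma> x = \<sigma> y \<Longrightarrow> x = y"
  using emb_nonzero[of "x - y"] emb_diff[of x y] sf_diff[OF sf, of x y] by auto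
lemma emb_divide: "x \<in> F \<Longrightarrow> y \<in> F \<Longrightarrow> \<sigma> (x / y) = \<sigma> x / \<sigma> y"
  by (simp add: divide_inverse emb_mult emb_inverse sf_inverse[OF sf])
lemma emb_of_rat: "\<sigma> (of_rat q) = of_rat q"
proof -
  obtain a b where "quotient_of q = (a, b)" by (cases "quotient_of q")
  then have "q = of_int a / of_int b" by (rule quotient_of_div)
  then have "(of_rat q :: complex) = of_int a / of_int b" by (simp add: of_rat_divide)
  then show ?thesis by (simp add: emb_divide emb_of_int sf_of_int[OF sf])
qed
lemma emb_power: "x \<in> F \<Longrightarrow> \<sigma> (x ^ n) = \<sigma> x ^ n"
  by (induction n) (auto simp: emb_1 emb_mult sf_power[OF sf])
lemma emb_sum: "(\<And>i. i \<in> A \<Longrightarrow> f i \<in> F) \<Longrightarrow> \<sigma> (sum f A) = (\<Sum>i\<in>A. \<sigma> (f i))"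
  by (induction A rule: infinite_finite_induct) (auto simp: emb_0 emb_add sf_sum[OF sf])
lemma emb_prod: "(\<And>i. i \<in> A \<Longrightarrow> f i \<in> F) \<Longrightarrow> \<sigma> (prod f A) = (\<Prod>i\<in>A. \<sigma> (f i))"
  by (induction A rule: infinite_finite_induct) (auto simp: emb_1 emb_mult sf_prod[OF sf])
lemma emb_poly_int:
  assumes x: "x \<in> F"
  shows "\<sigma> (poly (map_poly of_int p) x) = poly (map_poly of_int p) (\<sigma> x)"
proof -
  have "poly (map_poly of_int p) x = (\<Sum>i\<le>degree p. of_int (coeff p i) * x ^ i)"
    by (simp add: poly_altdef coeff_map_poly degree_map_poly)
  moreover have "poly (map_poly of_int p) (\<sigma> x) = (\<Sum>i\<le>degree p. of_int (coeff p i) * \<sigma> x ^ i)"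
    by (simp add: poly_altdef coeff_map_poly degree_map_poly)
  ultimately show ?thesis using x
    by (simp add: emb_sum emb_mult emb_power emb_of_int sf_mult[OF sf] sf_power[OF sf] sf_of_int[OF sf])
qed
lemma emb_algint: "x \<in> F \<Longrightarrow> algebraic_integer x \<Longrightarrow> algebraic_integer (\<sigma> x)"
  unfolding algebraic_integer_def using emb_poly_int emb_0 by metis
end

locale sext =
  fixes F :: "complex set" and \<tau> :: "complex \<Rightarrow> complex"
  assumes cs: "cyclic_sextic F \<tau>" and ti: "totally_imaginary F"
begin

lemma sf: "is_subfield F" using cs by (simp add: cyclic_sextic_def)
lemma emb_tau: "embedding_on F \<tau>" using cs by (simp add: cyclic_sextic_def)
lemma tauF: "x \<in> F \<Longrightarrow> \<tau> x \<in> F" using cs by (auto simp: cyclic_sextic_def)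
lemma taukF: "x \<in> F \<Longrightarrow> (\<tau> ^^ k) x \<in> F"
  by (induction k) (auto simp: tauF)
lemma emb_all: "embedding_on F \<sigma> \<Longrightarrow> \<exists>k<6. \<forall>x\<in>F. \<sigma> x = (\<tau> ^^ k) x"
  using cs by (simp add: cyclic_sextic_def)
lemma nontriv: "k \<in> {1..5} \<Longrightarrow> \<exists>x\<in>F. (\<tau> ^^ k) x \<noteq> x"
  using cs by (simp add: cyclic_sextic_def)

lemma emb_k: "embedding_on F (\<tau> ^^ k)"
proof (induction k)
  case 0 then show ?case by (simp add: embedding_on_def)
next
  case (Suc k)
  show ?case unfolding embedding_on_def
  proof (intro conjI ballI)
    show "(\<tau> ^^ Suc k) 1 = 1" using emb_1[OF sf Suc] emb_1[OF sf emb_tau] by simp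
  next
    fix x y assume x: "x \<in> F" and y: "y \<in> F"
    show "(\<tau> ^^ Suc k) (x + y) = (\<tau> ^^ Suc k) x + (\<tau> ^^ Suc k) y"
      using emb_add[OF sf Suc] emb_add[OF sf emb_tau] x y tauF taukF by simp
    show "(\<tau> ^^ Suc k) (x * y) = (\<tau> ^^ Suc k) x * (\<tau> ^^ Suc k) y"
      using emb_mult[OF sf Suc] emb_mult[OF sf emb_tau] x y tauF taukF by simp
  qed
qed

lemma tk_add: "x \<in> F \<Longrightarrow> y \<in> F \<Longrightarrow> (\<tau> ^^ k) (x + y) = (\<tau> ^^ k) x + (\<tau> ^^ k) y"
  by (rule emb_add[OF sf emb_k])
lemma tk_mult: "x \<in> F \<Longrightarrow> y \<in> F \<Longrightarrow> (\<tau> ^^ k) (x * y) = (\<tau> ^^ k) x * (\<tau> ^^ k) y"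
  by (rule emb_mult[OF sf emb_k])
lemma tk_diff: "x \<in> F \<Longrightarrow> y \<in> F \<Longrightarrow> (\<tau> ^^ k) (x - y) = (\<tau> ^^ k) x - (\<tau> ^^ k) y"
  by (rule emb_diff[OF sf emb_k])
lemma tk_inj: "x \<in> F \<Longrightarrow> y \<in> F \<Longrightarrow> (\<tau> ^^ k) x = (\<tau> ^^ k) y \<Longrightarrow> x = y"
  by (rule emb_inj[OF sf emb_k])

lemma tau6: "x \<in> F \<Longrightarrow> (\<tau> ^^ 6) x = x"
proof -
  obtain j where j: "j < 6" "\<forall>x\<in>F. (\<tau> ^^ 6) x = (\<tau> ^^ j) x"
    using emb_all[OF emb_k[of 6]] by blast
  have "j = 0"
  proof (rule ccontr)
    assume "j \<noteq> 0"
    have "\<forall>y\<in>F. (\<tau> ^^ (6 - j)) y = y"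
    proof
      fix y assume y: "y \<in> F"
      have "j + (6 - j) = 6" using j(1) by simp
      then have "(\<tau> ^^ j) ((\<tau> ^^ (6 - j)) y) = (\<tau> ^^ 6) y"
        by (metis funpow_add o_apply)
      also have "\<dots> = (\<tau> ^^ j) y" using j y by blast
      finally show "(\<tau> ^^ (6 - j)) y = y" using tk_inj taukF y by blast
    qed
    moreover have "6 - j \<in> {1..5}" using j(1) \<open>j \<noteq> 0\<close> by auto
    ultimately show False using nontriv by blast
  qed
  then show "x \<in> F \<Longrightarrow> (\<tau> ^^ 6) x = x" using j by auto
qed

lemma tau_mod: "x \<in> F \<Longrightarrow> (\<tau> ^^ k) x = (\<tau> ^^ (k mod 6)) x"
proof (induction k rule: less_induct)
  case (less k)
  show ?case
  proof (cases "k < 6")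
    case True then show ?thesis by simp
  next
    case False
    then have "k = (k - 6) + 6" by simp
    then have "(\<tau> ^^ k) x = (\<tau> ^^ (k - 6)) ((\<tau> ^^ 6) x)" by (metis funpow_add o_apply)
    also have "\<dots> = (\<tau> ^^ (k - 6)) x" using tau6 less.prems by simp
    also have "\<dots> = (\<tau> ^^ ((k - 6) mod 6)) x" using less.IH[of "k - 6"] less.prems False by simp
    finally show ?thesis using False by (simp add: mod_if)
  qed
qed

lemma tau_distinct:
  assumes "k < 6" "l < 6" "k \<noteq> l"
  shows "\<exists>y\<in>F. (\<tau> ^^ k) y \<noteq> (\<tau> ^^ l) y"
proof (rule ccontr)
  assume "\<not> ?thesis"
  then have eq: "\<forall>y\<in>F. (\<tau> ^^ k) y = (\<tau> ^^ l) y" by blast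
  have *: "\<forall>y\<in>F. (\<tau> ^^ (b - a)) y = y" if "a < b" "b < 6" "\<forall>y\<in>F. (\<tau> ^^ a) y = (\<tau> ^^ b) y" for a b
  proof
    fix y assume y: "y \<in> F"
    have "a + (b - a) = b" using that by simp
    then have "(\<tau> ^^ a) ((\<tau> ^^ (b - a)) y) = (\<tau> ^^ b) y"
      by (metis funpow_add o_apply)
    also have "\<dots> = (\<tau> ^^ a) y" using that y by auto
    finally show "(\<tau> ^^ (b - a)) y = y" using tk_inj taukF y by blast
  qed
  show False
  proof (cases "k < l")
    case True
    then have "\<forall>y\<in>F. (\<tau> ^^ (l - k)) y = y" using * assms eq by blast
    moreover have "l - k \<in> {1..5}" using True assms by auto
    ultimately show False using nontriv by blast
  next
    case False
    then have "l < k" using assms by auto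
    then have "\<forall>y\<in>F. (\<tau> ^^ (k - l)) y = y" using * assms eq by (metis)
    moreover have "k - l \<in> {1..5}" using \<open>l < k\<close> assms by auto
    ultimately show False using nontriv by blast
  qed
qed

lemma cnj_emb: "embedding_on F cnj"
  by (simp add: embedding_on_def)

lemma not_real: "\<exists>x\<in>F. x \<notin> \<real>"
proof -
  have "embedding_on F id" by (simp add: embedding_on_def)
  then have "\<not> (id ` F \<subseteq> \<real>)" using ti unfolding totally_imaginary_def by blast
  then show ?thesis by auto
qed

lemma cnj_tau3: "x \<in> F \<Longrightarrow> cnj x = (\<tau> ^^ 3) x"
proof -
  obtain c where c: "c < 6" "\<forall>x\<in>F. cnj x = (\<tau> ^^ c) x"
    using emb_all[OF cnj_emb] by blast
  have c0: "c \<noteq> 0"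
  proof
    assume "c = 0"
    then have "\<forall>x\<in>F. cnj x = x" using c by simp
    then show False using not_real Reals_cnj_iff by blast
  qed
  have cc: "\<forall>y\<in>F. (\<tau> ^^ (c + c)) y = y"
  proof
    fix y assume y: "y \<in> F"
    have "(\<tau> ^^ (c + c)) y = (\<tau> ^^ c) ((\<tau> ^^ c) y)" by (simp add: funpow_add)
    also have "\<dots> = cnj (cnj y)" using c y taukF by metis
    finally show "(\<tau> ^^ (c + c)) y = y" by simp
  qed
  have "c = 3"
  proof (rule ccontr)
    assume "c \<noteq> 3"
    then have "c \<in> {1,2,4,5}" using c(1) c0 by auto
    then have "(c + c) mod 6 \<in> {1..5}" by auto
    moreover have "\<forall>y\<in>F. (\<tau> ^^ ((c + c) mod 6)) y = y" using cc tau_mod by metis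
    ultimately show False using nontriv by blast
  qed
  then show "x \<in> F \<Longrightarrow> cnj x = (\<tau> ^^ 3) x" using c by auto
qed

lemma artin:
  assumes "finite S" "S \<subseteq> {..<6}" "\<And>x. x \<in> F \<Longrightarrow> (\<Sum>k\<in>S. c k * (\<tau> ^^ k) x) = 0" "k \<in> S"
  shows "c k = 0"
  using assms
proof (induction "card S" arbitrary: S c k rule: less_induct)
  case less
  show ?case
  proof (cases "\<exists>l\<in>S. l \<noteq> k")
    case False
    then have "S = {k}" using less.prems(4) by blast
    then have "c k * (\<tau> ^^ k) 1 = 0" using less.prems(3)[OF sf_1[OF sf]] by simp
    then show ?thesis using emb_1[OF sf emb_k] by simp
  next
    case True
    then obtain l where l: "l \<in> S" "l \<noteq> k" by blast
    have kl6: "k < 6" "l < 6" using less.prems(2,4) l(1) by auto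
    obtain y where y: "y \<in> F" "(\<tau> ^^ k) y \<noteq> (\<tau> ^^ l) y"
      using tau_distinct[OF kl6 l(2)[symmetric]] by blast
    define c' where "c' m = c m * ((\<tau> ^^ m) y - (\<tau> ^^ l) y)" for m
    have rel: "(\<Sum>m\<in>S - {l}. c' m * (\<tau> ^^ m) x) = 0" if x: "x \<in> F" for x
    proof -
      have "(\<Sum>m\<in>S - {l}. c' m * (\<tau> ^^ m) x) = (\<Sum>m\<in>S. c' m * (\<tau> ^^ m) x)"
        using l less.prems(1) by (simp add: c'_def sum_diff1)
      also have "\<dots> = (\<Sum>m\<in>S. c m * (\<tau> ^^ m) (y * x) - (\<tau> ^^ l) y * (c m * (\<tau> ^^ m) x))"
      proof (rule sum.cong)
        fix m assume "m \<in> S"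
        have "(\<tau> ^^ m) (y * x) = (\<tau> ^^ m) y * (\<tau> ^^ m) x" by (rule tk_mult[OF y(1) x])
        then show "c' m * (\<tau> ^^ m) x = c m * (\<tau> ^^ m) (y * x) - (\<tau> ^^ l) y * (c m * (\<tau> ^^ m) x)"
          unfolding c'_def by (simp only: ring_distribs mult.assoc mult.left_commute)
      qed simp
      also have "\<dots> = (\<Sum>m\<in>S. c m * (\<tau> ^^ m) (y * x)) - (\<tau> ^^ l) y * (\<Sum>m\<in>S. c m * (\<tau> ^^ m) x)"
        by (simp only: sum_subtractf sum_distrib_left)
      also have "\<dots> = 0" using less.prems(3)[OF x] less.prems(3)[OF sf_mult[OF sf y(1) x]] by simp
      finally show ?thesis .
    qed
    have "card (S - {l}) < card S" using l(1) less.prems(1) by (simp only: card_Diff1_less_iff)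
    have "c' k = 0"
    proof (rule less.hyps)
      show "card (S - {l}) < card S" by fact
      show "finite (S - {l})" using less.prems(1) by simp
      show "S - {l} \<subseteq> {..<6}" using less.prems(2) by blast
      show "k \<in> S - {l}" using less.prems(4) l(2) by simp
      show "\<And>x. x \<in> F \<Longrightarrow> (\<Sum>m\<in>S - {l}. c' m * (\<tau> ^^ m) x) = 0" by (rule rel)
    qed
    then show ?thesis using y by (simp add: c'_def)
  qed
qed

end

definition CP :: "(complex \<Rightarrow> complex) \<Rightarrow> complex \<Rightarrow> complex poly" where
  "CP \<sigma> x = (\<Prod>k<6. [:- (\<sigma> ^^ k) x, 1:])"

context sext begin

lemma basis_ex: "\<exists>b. (\<forall>i<6. b i \<in> F) \<and> (\<forall>y\<in>F. \<exists>c::nat\<Rightarrow>rat. y = (\<Sum>i<6. of_rat (c i) * b i))"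
  using cs unfolding cyclic_sextic_def has_degree_def by blast

definition bas :: "nat \<Rightarrow> complex" where
  "bas = (SOME b. (\<forall>i<6. b i \<in> F) \<and> (\<forall>y\<in>F. \<exists>c::nat\<Rightarrow>rat. y = (\<Sum>i<6. of_rat (c i) * b i)))"

lemma bas: "\<forall>i<6. bas i \<in> F" "\<forall>y\<in>F. \<exists>c::nat\<Rightarrow>rat. y = (\<Sum>i<6. of_rat (c i) * bas i)"
  using someI_ex[OF basis_ex] unfolding bas_def by blast+

definition co :: "complex \<Rightarrow> nat \<Rightarrow> rat" where
  "co y = (SOME c::nat\<Rightarrow>rat. y = (\<Sum>i<6. of_rat (c i) * bas i))"

lemma co: assumes "y \<in> F" shows "y = (\<Sum>i<6. of_rat (co y i) * bas i)"
proof -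
  have "\<exists>c::nat\<Rightarrow>rat. y = (\<Sum>i<6. of_rat (c i) * bas i)" using bas(2) assms by blast
  then show ?thesis unfolding co_def by (rule someI_ex)
qed

lemma tk_lin: assumes y: "y \<in> F"
  shows "(\<tau> ^^ k) y = (\<Sum>i<6. of_rat (co y i) * (\<tau> ^^ k) (bas i))"
proof -
  have "(\<tau> ^^ k) y = (\<tau> ^^ k) (\<Sum>i<6. of_rat (co y i) * bas i)" using co[OF y] by simp
  also have "\<dots> = (\<Sum>i<6. (\<tau> ^^ k) (of_rat (co y i) * bas i))"
    by (rule emb_sum[OF sf emb_k]) (simp add: sf_mult[OF sf] sf_of_rat[OF sf] bas(1))
  also have "\<dots> = (\<Sum>i<6. of_rat (co y i) * (\<tau> ^^ k) (bas i))"
    by (rule sum.cong) (simp_all add: tk_mult sf_of_rat[OF sf] bas(1) emb_of_rat[OF sf emb_k])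
  finally show ?thesis .
qed

lemma CP_rat: assumes x: "x \<in> F" shows "coeff (CP \<tau> x) j \<in> \<rat>"
proof -
  define M :: "rat mat" where "M = mat 6 6 (\<lambda>(i,j). co (x * bas j) i)"
  define Mc :: "complex mat" where "Mc = map_mat of_rat M"
  define V :: "complex mat" where "V = mat 6 6 (\<lambda>(k,j). (\<tau> ^^ k) (bas j))"
  define D :: "complex mat" where "D = mat 6 6 (\<lambda>(i,j). if i = j then (\<tau> ^^ i) x else 0)"
  have carr: "M \<in> carrier_mat 6 6" "Mc \<in> carrier_mat 6 6" "V \<in> carrier_mat 6 6" "D \<in> carrier_mat 6 6"
    by (auto simp: M_def Mc_def V_def D_def)
  have VM: "V * Mc = D * V"
  proof (rule eq_matI)
    fix k j assume kj: "k < dim_row (D * V)" "j < dim_col (D * V)"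
    then have k: "k < 6" and j: "j < 6" by (auto simp: D_def V_def)
    have "(V * Mc) $$ (k, j) = (\<Sum>i<6. (\<tau> ^^ k) (bas i) * of_rat (co (x * bas j) i))"
      using k j by (simp add: V_def Mc_def M_def scalar_prod_def lessThan_atLeast0)
    also have "\<dots> = (\<tau> ^^ k) (x * bas j)"
      using tk_lin[of "x * bas j" k] sf_mult[OF sf x] bas(1) j by (simp add: mult.commute)
    also have "\<dots> = (\<tau> ^^ k) x * (\<tau> ^^ k) (bas j)" using tk_mult x bas(1) j by simp
    also have "\<dots> = (\<Sum>i<6. if i = k then (\<tau> ^^ k) x * (\<tau> ^^ i) (bas j) else 0)"
      using k by (simp add: sum.delta)
    also have "\<dots> = (\<Sum>i<6. (if k = i then (\<tau> ^^ k) x else 0) * (\<tau> ^^ i) (bas j))"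
      by (rule sum.cong) auto
    also have "\<dots> = (D * V) $$ (k, j)"
      using k j by (simp add: D_def V_def scalar_prod_def lessThan_atLeast0)
    finally show "(V * Mc) $$ (k, j) = (D * V) $$ (k, j)" .
  qed (auto simp: D_def V_def Mc_def M_def)
  have detV: "det V \<noteq> 0"
  proof
    assume "det V = 0"
    then have "det (transpose_mat V) = 0" using carr by (simp add: det_transpose)
    then obtain v where v: "v \<in> carrier_vec 6" "v \<noteq> 0\<^sub>v 6" "transpose_mat V *\<^sub>v v = 0\<^sub>v 6"
      using det_0_iff_vec_prod_zero[of "transpose_mat V" 6] carr by auto
    have col: "(\<Sum>k<6. v $ k * (\<tau> ^^ k) (bas j)) = 0" if "j < 6" for j
    proof -
      have "(transpose_mat V *\<^sub>v v) $ j = 0" using v(3) that by simp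
      then show ?thesis using that v(1)
        by (simp add: V_def mult_mat_vec_def scalar_prod_def lessThan_atLeast0 mult.commute)
    qed
    have rel: "(\<Sum>k\<in>{..<6}. v $ k * (\<tau> ^^ k) y) = 0" if y: "y \<in> F" for y
    proof -
      have "(\<Sum>k<6. v $ k * (\<tau> ^^ k) y) = (\<Sum>k<6. v $ k * (\<Sum>i<6. of_rat (co y i) * (\<tau> ^^ k) (bas i)))"
        using tk_lin[OF y] by simp
      also have "\<dots> = (\<Sum>k<6. \<Sum>i<6. of_rat (co y i) * (v $ k * (\<tau> ^^ k) (bas i)))"
        by (simp add: sum_distrib_left mult.left_commute)
      also have "\<dots> = (\<Sum>i<6. \<Sum>k<6. of_rat (co y i) * (v $ k * (\<tau> ^^ k) (bas i)))"
        by (rule sum.swap)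
      also have "\<dots> = (\<Sum>i<6. of_rat (co y i) * (\<Sum>k<6. v $ k * (\<tau> ^^ k) (bas i)))"
        by (simp add: sum_distrib_left)
      also have "\<dots> = 0" using col by simp
      finally show ?thesis .
    qed
    have "\<forall>k<6. v $ k = 0"
      using artin[of "{..<6}" "\<lambda>k. v $ k"] rel by auto
    then have "v = 0\<^sub>v 6" using v(1) by (intro eq_vecI) auto
    with v(2) show False by simp
  qed
  obtain W where W: "W \<in> carrier_mat 6 6" "W * V = 1\<^sub>m 6" "V * W = 1\<^sub>m 6"
    using det_non_zero_imp_unit[OF carr(3) detV, of undefined]
    unfolding Units_def ring_mat_simps by auto
  have "Mc = W * D * V"
  proof -
    have "Mc = (W * V) * Mc" using W carr by simp
    also have "\<dots> = W * (V * Mc)" by (rule assoc_mult_mat) (use W carr in auto)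
    also have "\<dots> = W * (D * V)" using VM by simp
    also have "\<dots> = W * D * V" by (rule assoc_mult_mat[symmetric]) (use W carr in auto)
    finally show ?thesis .
  qed
  then have sim: "similar_mat Mc D"
    by (intro similar_matI[of Mc D W V 6]) (use W carr in auto)
  have ut: "upper_triangular D" unfolding upper_triangular_def D_def by simp
  have dg: "diag_mat D = map (\<lambda>i. (\<tau> ^^ i) x) [0..<6]"
    unfolding diag_mat_def by (rule map_cong) (auto simp: D_def)
  have "char_poly Mc = char_poly D" by (rule char_poly_similar[OF sim])
  also have "\<dots> = prod_list (map (\<lambda>a. [:- a, 1:]) (diag_mat D))" by (rule char_poly_upper_triangular[OF carr(4) ut])
  also have "\<dots> = prod_list (map (\<lambda>i. [:- (\<tau> ^^ i) x, 1:]) [0..<6])"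
    unfolding dg map_map o_def ..
  also have "\<dots> = (\<Prod>i\<in>set [0..<6]. [:- (\<tau> ^^ i) x, 1:])"
    by (rule prod.distinct_set_conv_list[symmetric]) simp
  also have "set [0..<6] = {..<6::nat}" by auto
  finally have "char_poly Mc = CP \<tau> x" unfolding CP_def .
  moreover have "char_poly Mc = map_poly of_rat (char_poly M)"
    unfolding Mc_def by (rule of_rat_hom.char_poly_hom[OF carr(1)])
  ultimately have "CP \<tau> x = map_poly of_rat (char_poly M)" by simp
  then show ?thesis by (simp add: coeff_map_poly)
qed

end

definition zs :: "complex list \<Rightarrow> complex set" where
  "zs G = {x. \<exists>c. x = (\<Sum>i<length G. of_int (c i) * G ! i)}"

lemma zs_lincomb: "x \<in> zs G \<Longrightarrow> \<exists>c. x = (\<Sum>i<length G. of_int (c i) * G ! i)"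
  by (simp add: zs_def)

lemma zs_gen: assumes "g \<in> set G" shows "g \<in> zs G"
proof -
  obtain i where i: "i < length G" "g = G ! i" using assms by (auto simp: in_set_conv_nth)
  have "(\<Sum>j<length G. of_int (if j = i then 1 else 0) * G ! j) = (\<Sum>j<length G. if j = i then G ! j else 0)"
    by (rule sum.cong) auto
  also have "\<dots> = G ! i" using i(1) by (simp add: sum.delta)
  finally have "(\<Sum>j<length G. of_int (if j = i then 1 else 0) * G ! j) = G ! i" .
  then have "g = (\<Sum>j<length G. of_int (if j = i then 1 else 0) * G ! j)" using i(2) by simp
  then show ?thesis unfolding zs_def mem_Collect_eq by (rule exI[of _ "\<lambda>j. if j = i then (1::int) else 0"])
qed

lemma zs_0: "0 \<in> zs G"
  unfolding zs_def by (rule CollectI, rule exI[of _ "\<lambda>_. 0"]) simp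

lemma zs_add: assumes "x \<in> zs G" "y \<in> zs G" shows "x + y \<in> zs G"
proof -
  obtain c d where "x = (\<Sum>i<length G. of_int (c i) * G ! i)" "y = (\<Sum>i<length G. of_int (d i) * G ! i)"
    using assms by (auto simp: zs_def)
  then have "x + y = (\<Sum>i<length G. of_int (c i + d i) * G ! i)" by (simp add: sum.distrib distrib_right)
  then show ?thesis unfolding zs_def mem_Collect_eq by (rule exI[of _ "\<lambda>i. c i + d i"])
qed

lemma zs_neg: assumes "x \<in> zs G" shows "- x \<in> zs G"
proof -
  obtain c where "x = (\<Sum>i<length G. of_int (c i) * G ! i)" using assms by (auto simp: zs_def)
  then have "- x = (\<Sum>i<length G. of_int (- c i) * G ! i)" by (simp add: sum_negf)
  then show ?thesis unfolding zs_def mem_Collect_eq by (rule exI[of _ "\<lambda>i. - c i"])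
qed

lemma zs_int_mult: assumes "x \<in> zs G" shows "of_int n * x \<in> zs G"
proof -
  obtain c where "x = (\<Sum>i<length G. of_int (c i) * G ! i)" using assms by (auto simp: zs_def)
  then have "of_int n * x = (\<Sum>i<length G. of_int (n * c i) * G ! i)" by (simp add: sum_distrib_left mult.assoc)
  then show ?thesis unfolding zs_def mem_Collect_eq by (rule exI[of _ "\<lambda>i. n * c i"])
qed

lemma zs_sum: "(\<And>i. i \<in> A \<Longrightarrow> f i \<in> zs G) \<Longrightarrow> sum f A \<in> zs G"
  by (induction A rule: infinite_finite_induct) (auto intro: zs_add zs_0)

lemma zs_stable: assumes "\<And>g. g \<in> set G \<Longrightarrow> y * g \<in> zs G" "x \<in> zs G" shows "y * x \<in> zs G"
proof -
  obtain c where "x = (\<Sum>i<length G. of_int (c i) * G ! i)" using assms by (auto simp: zs_def)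
  then have "y * x = (\<Sum>i<length G. of_int (c i) * (y * G ! i))" by (simp add: sum_distrib_left mult_ac)
  also have "\<dots> \<in> zs G" using assms(1) by (intro zs_sum zs_int_mult) (auto intro: assms(1) nth_mem)
  finally show ?thesis .
qed

lemma module_algint:
  assumes nz: "\<exists>g\<in>set G. g \<noteq> 0" and st: "\<And>g. g \<in> set G \<Longrightarrow> x * g \<in> zs G"
  shows "algebraic_integer x"
proof -
  define n where "n = length G"
  have "\<forall>i<n. \<exists>c. x * G ! i = (\<Sum>j<n. of_int (c j) * G ! j)"
    using st zs_lincomb n_def by auto
  then obtain A where A: "\<And>i. i < n \<Longrightarrow> x * G ! i = (\<Sum>j<n. of_int (A i j) * G ! j)"
    by metis
  define Ai :: "int mat" where "Ai = mat n n (\<lambda>(i,j). A i j)"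
  define Ac :: "complex mat" where "Ac = map_mat of_int Ai"
  define v :: "complex vec" where "v = vec n (\<lambda>i. G ! i)"
  have Ai: "Ai \<in> carrier_mat n n" by (simp add: Ai_def)
  have Ac: "Ac \<in> carrier_mat n n" by (simp add: Ac_def Ai_def)
  have v: "v \<in> carrier_vec n" by (simp add: v_def)
  have v0: "v \<noteq> 0\<^sub>v n"
  proof
    assume "v = 0\<^sub>v n"
    then have "\<forall>i<n. G ! i = 0" by (metis index_vec index_zero_vec(1) v_def)
    then show False using nz by (auto simp: in_set_conv_nth n_def)
  qed
  have "Ac *\<^sub>v v = x \<cdot>\<^sub>v v"
  proof (rule eq_vecI)
    fix i assume "i < dim_vec (x \<cdot>\<^sub>v v)"
    then have i: "i < n" by (simp add: v_def)
    have "(Ac *\<^sub>v v) $ i = (\<Sum>j<n. of_int (A i j) * G ! j)"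
      using i by (simp add: Ac_def Ai_def v_def mult_mat_vec_def scalar_prod_def lessThan_atLeast0)
    also have "\<dots> = x * G ! i" using A[OF i] by simp
    also have "\<dots> = (x \<cdot>\<^sub>v v) $ i" using i by (simp add: v_def)
    finally show "(Ac *\<^sub>v v) $ i = (x \<cdot>\<^sub>v v) $ i" .
  qed (simp add: Ac_def Ai_def v_def)
  then have "eigenvector Ac v x" using v v0 Ac by (simp add: eigenvector_def)
  then have "eigenvalue Ac x" by (auto simp: eigenvalue_def)
  then have "poly (char_poly Ac) x = 0" using eigenvalue_root_char_poly[OF Ac] by simp
  moreover have "char_poly Ac = map_poly of_int (char_poly Ai)"
    unfolding Ac_def by (rule of_int_hom.char_poly_hom[OF Ai])
  moreover have "lead_coeff (char_poly Ai) = 1"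
    using degree_monic_char_poly[OF Ai] by simp
  ultimately show ?thesis unfolding algebraic_integer_def by metis
qed

lemma algint_poly:
  assumes "algebraic_integer a"
  obtains p :: "int poly" where "lead_coeff p = 1" "poly (map_poly of_int p) a = 0" "degree p \<ge> 1"
proof -
  obtain p :: "int poly" where p: "lead_coeff p = 1" "poly (map_poly of_int p) a = 0"
    using assms unfolding algebraic_integer_def by blast
  have "degree p \<noteq> 0"
  proof
    assume "degree p = 0"
    then have "p = [:1:]" using p(1) degree_0_id[of p] by simp
    then show False using p(2) by simp
  qed
  then show ?thesis using that p by simp
qed

lemma powers_in_zs:
  assumes p: "lead_coeff p = 1" "poly (map_poly of_int p) a = 0"
    and base: "\<And>i. i < degree p \<Longrightarrow> a ^ i * w \<in> zs G"
  shows "a ^ k * w \<in> zs G"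
proof (induction k rule: less_induct)
  case (less k)
  define m where "m = degree p"
  show ?case
  proof (cases "k < m")
    case True then show ?thesis using base m_def by simp
  next
    case False
    have "0 = poly (map_poly of_int p) a" using p by simp
    also have "\<dots> = (\<Sum>i\<le>m. of_int (coeff p i) * a ^ i)"
      by (simp add: poly_altdef coeff_map_poly degree_map_poly m_def)
    also have "\<dots> = (\<Sum>i<m. of_int (coeff p i) * a ^ i) + a ^ m"
      using p(1) by (simp add: lessThan_Suc_atMost[symmetric] m_def)
    finally have am: "a ^ m = - (\<Sum>i<m. of_int (coeff p i) * a ^ i)" by (simp add: eq_neg_iff_add_eq_0 add.commute)
    have "a ^ k * w = a ^ (k - m) * a ^ m * w" using False by (simp add: power_add[symmetric])
    also have "\<dots> = - (\<Sum>i<m. of_int (coeff p i) * (a ^ (k - m + i) * w))"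
      unfolding am by (simp add: sum_distrib_left sum_distrib_right power_add mult_ac)
    also have "\<dots> \<in> zs G"
    proof (rule zs_neg, rule zs_sum, rule zs_int_mult)
      fix i assume "i \<in> {..<m}"
      then have "k - m + i < k" using False by auto
      then show "a ^ (k - m + i) * w \<in> zs G" by (rule less.IH)
    qed
    finally show ?thesis .
  qed
qed

lemma algint_add_mult:
  assumes a: "algebraic_integer a" and b: "algebraic_integer b"
  shows "algebraic_integer (a + b)" "algebraic_integer (a * b)"
proof -
  obtain p where p: "lead_coeff p = 1" "poly (map_poly of_int p) a = 0" "degree p \<ge> 1"
    using algint_poly[OF a] by blast
  obtain q where q: "lead_coeff q = 1" "poly (map_poly of_int q) b = 0" "degree q \<ge> 1"
    using algint_poly[OF b] by blast
  define G where "G = concat (map (\<lambda>i. map (\<lambda>j. a ^ i * b ^ j) [0..<degree q]) [0..<degree p])"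
  have setG: "set G = {a ^ i * b ^ j | i j. i < degree p \<and> j < degree q}"
    unfolding G_def by (auto; force)
  have A: "a ^ k * b ^ j \<in> zs G" if "j < degree q" for k j
    by (rule powers_in_zs[OF p(1,2)]) (use that in \<open>intro zs_gen, unfold setG, blast\<close>)
  have AB: "a ^ k * b ^ j \<in> zs G" for k j
  proof -
    have "b ^ j * a ^ k \<in> zs G"
      by (rule powers_in_zs[OF q(1,2)]) (use A in \<open>simp add: mult.commute\<close>)
    then show ?thesis by (simp add: mult.commute)
  qed
  have sa: "a * g \<in> zs G" if g: "g \<in> set G" for g
  proof -
    obtain i j where "g = a ^ i * b ^ j" using g setG by auto
    then have "a * g = a ^ Suc i * b ^ j" by (simp add: mult.assoc)
    then show ?thesis using AB[of "Suc i" j] by (simp only:)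
  qed
  have sb: "b * g \<in> zs G" if g: "g \<in> set G" for g
  proof -
    obtain i j where "g = a ^ i * b ^ j" using g setG by auto
    then have "b * g = a ^ i * b ^ Suc j" by (simp add: mult_ac)
    then show ?thesis using AB[of i "Suc j"] by (simp only:)
  qed
  have nz: "\<exists>g\<in>set G. g \<noteq> 0"
  proof -
    have "a ^ 0 * b ^ 0 \<in> set G" unfolding setG using p(3) q(3) by (intro CollectI exI[of _ 0] conjI) auto
    then show ?thesis by (intro bexI[of _ "a ^ 0 * b ^ 0"]) auto
  qed
  show "algebraic_integer (a + b)"
    by (rule module_algint[OF nz]) (simp add: distrib_right sa sb zs_add)
  show "algebraic_integer (a * b)"
    by (rule module_algint[OF nz]) (simp add: mult.assoc sa sb zs_stable)
qed

lemma algint_of_int: "algebraic_integer (of_int n)"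
  unfolding algebraic_integer_def
  by (rule exI[of _ "[:-n, 1:]"]) simp

lemma algint_add: "algebraic_integer a \<Longrightarrow> algebraic_integer b \<Longrightarrow> algebraic_integer (a + b)"
  using algint_add_mult by blast
lemma algint_mult: "algebraic_integer a \<Longrightarrow> algebraic_integer b \<Longrightarrow> algebraic_integer (a * b)"
  using algint_add_mult by blast
lemma algint_uminus: assumes "algebraic_integer a" shows "algebraic_integer (- a)"
proof -
  have "algebraic_integer (of_int (-1) * a)" by (rule algint_mult[OF algint_of_int assms])
  then show ?thesis by simp
qed
lemma algint_diff: assumes "algebraic_integer a" "algebraic_integer b" shows "algebraic_integer (a - b)"
proof -
  have "algebraic_integer (a + - b)" by (rule algint_add[OF assms(1) algint_uminus[OF assms(2)]])
  then show ?thesis by simp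
qed
lemma algint_0: "algebraic_integer 0" using algint_of_int[of 0] by simp
lemma algint_1: "algebraic_integer 1" using algint_of_int[of 1] by simp
lemma algint_power: "algebraic_integer a \<Longrightarrow> algebraic_integer (a ^ n)"
  by (induction n) (auto simp: algint_1 algint_mult)
lemma algint_sum: "(\<And>i. i \<in> A \<Longrightarrow> algebraic_integer (f i)) \<Longrightarrow> algebraic_integer (sum f A)"
  by (induction A rule: infinite_finite_induct) (auto simp: algint_0 algint_add)
lemma algint_prod: "(\<And>i. i \<in> A \<Longrightarrow> algebraic_integer (f i)) \<Longrightarrow> algebraic_integer (prod f A)"
  by (induction A rule: infinite_finite_induct) (auto simp: algint_1 algint_mult)

lemma rat_algint:
  assumes xq: "(x::complex) \<in> \<rat>" and ai: "algebraic_integer x"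
  shows "x \<in> \<int>"
proof -
  obtain r where r: "x = of_rat r" using xq by (auto simp: Rats_def)
  obtain a b where ab: "quotient_of r = (a, b)" by (cases "quotient_of r")
  have b0: "b > 0" using ab quotient_of_denom_pos by blast
  have cop: "coprime a b" using ab quotient_of_coprime by blast
  have rab: "r = of_int a / of_int b" using ab quotient_of_div by blast
  have xab: "x = of_int a / of_int b" using r rab by (simp add: of_rat_divide)
  obtain p :: "int poly" where p: "lead_coeff p = 1" "poly (map_poly of_int p) x = 0"
    using ai unfolding algebraic_integer_def by blast
  define m where "m = degree p"
  define c where "c i = coeff p i" for i
  have cm: "c m = 1" using p(1) by (simp add: c_def m_def)
  have "(\<Sum>i\<le>m. of_int (c i) * x ^ i) = 0"
    using p(2) by (simp add: poly_altdef coeff_map_poly degree_map_poly m_def c_def)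
  then have "of_int b ^ m * (\<Sum>i\<le>m. of_int (c i) * x ^ i) = 0" by simp
  moreover have "of_int b ^ m * (\<Sum>i\<le>m. of_int (c i) * x ^ i) = (\<Sum>i\<le>m. (of_int (c i * a ^ i * b ^ (m - i)) :: complex))"
    unfolding sum_distrib_left
  proof (rule sum.cong)
    fix i assume "i \<in> {..m}"
    then have "m = i + (m - i)" by simp
    then have "(of_int b :: complex) ^ m = of_int b ^ i * of_int b ^ (m - i)" by (metis power_add)
    moreover have "(of_int b :: complex) ^ i * x ^ i = of_int a ^ i"
      using b0 by (simp add: xab power_divide)
    ultimately show "of_int b ^ m * (of_int (c i) * x ^ i) = (of_int (c i * a ^ i * b ^ (m - i)) :: complex)"
      by (simp add: mult_ac)
  qed simp
  ultimately have "(of_int (\<Sum>i\<le>m. c i * a ^ i * b ^ (m - i)) :: complex) = 0" by simp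
  then have S: "(\<Sum>i\<le>m. c i * a ^ i * b ^ (m - i)) = 0" by (simp only: of_int_eq_0_iff)
  have "(\<Sum>i\<le>m. c i * a ^ i * b ^ (m - i)) = (\<Sum>i<m. c i * a ^ i * b ^ (m - i)) + a ^ m"
    using cm by (simp add: lessThan_Suc_atMost[symmetric])
  then have am: "a ^ m = - (\<Sum>i<m. c i * a ^ i * b ^ (m - i))" using S by simp
  have "b dvd (\<Sum>i<m. c i * a ^ i * b ^ (m - i))"
  proof (rule dvd_sum)
    fix i assume "i \<in> {..<m}"
    then have "m - i = Suc (m - i - 1)" by simp
    then show "b dvd c i * a ^ i * b ^ (m - i)" by (metis dvd_mult dvd_triv_left power_Suc)
  qed
  then have "b dvd a ^ m" using am by simp
  moreover have "coprime (a ^ m) b" by (rule coprime_power_left_iff[THEN iffD2], rule disjI1, rule cop)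
  ultimately have "\<bar>b\<bar> = 1" using coprime_common_divisor_int[of "a ^ m" b b] by simp
  then have "b = 1" using b0 by linarith
  then show ?thesis using xab by simp
qed

lemma coeff_lin_mult: "coeff ([:-(a::complex), 1:] * Q) j = - a * coeff Q j + (if j = 0 then 0 else coeff Q (j - 1))"
  by (simp add: coeff_pCons')

lemma prod_lin_algint:
  fixes f :: "'b \<Rightarrow> complex"
  assumes "finite A" "\<And>k. k \<in> A \<Longrightarrow> algebraic_integer (f k)"
  shows "algebraic_integer (coeff (\<Prod>k\<in>A. [:- f k, 1:]) j)"
  using assms
proof (induction A arbitrary: j rule: finite_induct)
  case empty
  then show ?case by (cases j) (auto simp: algint_0 algint_1)
next
  case (insert x S)
  have h1: "algebraic_integer (coeff (\<Prod>k\<in>S. [:- f k, 1:]) i)" for i using insert by blast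
  have h2: "algebraic_integer (f x)" using insert by blast
  have h3: "algebraic_integer (if j = 0 then 0 else coeff (\<Prod>k\<in>S. [:- f k, 1:]) (j - 1))"
    using h1 algint_0 by simp
  have "algebraic_integer (- f x * coeff (\<Prod>k\<in>S. [:- f k, 1:]) j + (if j = 0 then 0 else coeff (\<Prod>k\<in>S. [:- f k, 1:]) (j - 1)))"
    by (rule algint_add[OF algint_mult[OF algint_uminus[OF h2] h1] h3])
  moreover have "(\<Prod>k\<in>insert x S. [:- f k, 1:]) = [:- f x, 1:] * (\<Prod>k\<in>S. [:- f k, 1:])"
    using insert(1,2) by simp
  ultimately show ?case by (simp only: coeff_lin_mult)
qed

lemma prod_lin_bound:
  fixes f :: "'b \<Rightarrow> complex"
  assumes "finite A" "\<And>k. k \<in> A \<Longrightarrow> cmod (f k) \<le> 1"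
  shows "cmod (coeff (\<Prod>k\<in>A. [:- f k, 1:]) j) \<le> 2 ^ card A"
  using assms
proof (induction A arbitrary: j rule: finite_induct)
  case empty
  then show ?case by (cases j) auto
next
  case (insert x S)
  let ?Q = "\<Prod>k\<in>S. [:- f k, 1:]"
  have a: "cmod (- f x * coeff ?Q j) \<le> 2 ^ card S"
  proof -
    have "cmod (- f x * coeff ?Q j) = cmod (f x) * cmod (coeff ?Q j)" by (simp add: norm_mult)
    also have "\<dots> \<le> 1 * 2 ^ card S"
      using insert by (intro mult_mono) auto
    finally show ?thesis by simp
  qed
  have b: "cmod (if j = 0 then 0 else coeff ?Q (j - 1)) \<le> 2 ^ card S"
    using insert by auto
  have pi: "(\<Prod>k\<in>insert x S. [:- f k, 1:]) = [:- f x, 1:] * ?Q"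
    using insert(1,2) by simp
  have "cmod (coeff (\<Prod>k\<in>insert x S. [:- f k, 1:]) j) = cmod (- f x * coeff ?Q j + (if j = 0 then 0 else coeff ?Q (j - 1)))"
    unfolding pi coeff_lin_mult ..
  also have "\<dots> \<le> cmod (- f x * coeff ?Q j) + cmod (if j = 0 then 0 else coeff ?Q (j - 1))"
    by (rule norm_triangle_ineq)
  also have "\<dots> \<le> 2 ^ card (insert x S)" using a b insert by simp
  finally show ?case .
qed

lemma prod_lin_degree:
  fixes f :: "'b \<Rightarrow> complex"
  assumes "finite A"
  shows "degree (\<Prod>k\<in>A. [:- f k, 1:]) \<le> card A"
proof -
  have "degree (\<Prod>k\<in>A. [:- f k, 1:]) \<le> sum (degree \<circ> (\<lambda>k. [:- f k, 1:])) A"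
    by (rule degree_prod_sum_le[OF assms])
  also have "\<dots> = card A" by simp
  finally show ?thesis .
qed

lemma prod_lin_top:
  fixes f :: "'b \<Rightarrow> complex"
  assumes "finite A"
  shows "coeff (\<Prod>k\<in>A. [:- f k, 1:]) (card A) = 1"
  using assms
proof (induction A rule: finite_induct)
  case empty then show ?case by simp
next
  case (insert x S)
  have "coeff (\<Prod>k\<in>S. [:- f k, 1:]) (Suc (card S)) = 0"
    using prod_lin_degree[OF insert(1), of f] by (intro coeff_eq_0) simp
  moreover have "(\<Prod>k\<in>insert x S. [:- f k, 1:]) = [:- f x, 1:] * (\<Prod>k\<in>S. [:- f k, 1:])"
    using insert(1,2) by simp
  moreover have "card (insert x S) = Suc (card S)" using insert(1,2) by simp
  ultimately show ?case using insert(3) by (simp add: coeff_lin_mult)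
qed

lemma prod_lin_trace:
  fixes f :: "'b \<Rightarrow> complex"
  assumes "finite A"
  shows "coeff (\<Prod>k\<in>A. [:- f k, 1:]) (card A - 1) = (if A = {} then 1 else - sum f A)"
  using assms
proof (induction A rule: finite_induct)
  case empty then show ?case by simp
next
  case (insert x S)
  show ?case
  proof (cases "S = {}")
    case True then show ?thesis by simp
  next
    case False
    then have c: "card S \<ge> 1" using insert(1) by (simp add: Suc_leI card_gt_0_iff)
    have "coeff (\<Prod>k\<in>insert x S. [:- f k, 1:]) (card (insert x S) - 1)
        = - f x * coeff (\<Prod>k\<in>S. [:- f k, 1:]) (card S) + coeff (\<Prod>k\<in>S. [:- f k, 1:]) (card S - 1)"
    proof -
      have "(\<Prod>k\<in>insert x S. [:- f k, 1:]) = [:- f x, 1:] * (\<Prod>k\<in>S. [:- f k, 1:])"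
        using insert(1,2) by simp
      moreover have "card (insert x S) - 1 = card S" using insert(1,2) by simp
      ultimately show ?thesis using c by (simp add: coeff_pCons')
    qed
    also have "\<dots> = - f x - sum f S" using insert False prod_lin_top[OF insert(1), of f] by simp
    finally show ?thesis using insert by simp
  qed
qed

context sext begin

lemma CP_int: assumes x: "x \<in> F" and ai: "algebraic_integer x" shows "coeff (CP \<tau> x) j \<in> \<int>"
proof (rule rat_algint)
  show "coeff (CP \<tau> x) j \<in> \<rat>" by (rule CP_rat[OF x])
  show "algebraic_integer (coeff (CP \<tau> x) j)" unfolding CP_def
    by (rule prod_lin_algint) (auto intro: emb_algint[OF sf emb_k] x ai)
qed

lemma TR: assumes x: "x \<in> F" shows "(\<Sum>k<6. (\<tau> ^^ k) x) \<in> \<rat>"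
proof -
  have "coeff (CP \<tau> x) 5 = - (\<Sum>k<6. (\<tau> ^^ k) x)"
  proof -
    have "(0::nat) \<in> {..<6}" by simp
    then have ne: "{..<6::nat} \<noteq> {}" by blast
    show ?thesis using prod_lin_trace[of "{..<6::nat}" "\<lambda>k. (\<tau> ^^ k) x"] ne unfolding CP_def by simp
  qed
  then have "- (\<Sum>k<6. (\<tau> ^^ k) x) \<in> \<rat>" using CP_rat[OF x, of 5] by simp
  then show ?thesis by (metis Rats_minus_iff)
qed

lemma INV: assumes x: "x \<in> F" and inv: "\<tau> x = x" shows "x \<in> \<rat>"
proof -
  have k: "(\<tau> ^^ k) x = x" for k by (induction k) (simp_all add: inv)
  have "(\<Sum>k<6. (\<tau> ^^ k) x) = 6 * x" using k by simp
  then have "6 * x \<in> \<rat>" using TR[OF x] by simp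
  moreover have "(1/6::complex) \<in> \<rat>" by (simp add: Rats_divide)
  ultimately have "(1/6) * (6 * x) \<in> \<rat>" using Rats_mult by blast
  then show ?thesis by simp
qed

lemma kronecker:
  assumes x: "x \<in> F" and ai: "algebraic_integer x" and abs1: "\<And>k. k < 6 \<Longrightarrow> cmod ((\<tau> ^^ k) x) = 1"
  shows "x \<in> roots_of_unity F"
proof -
  define B :: "complex set" where "B = of_int ` {-64..64}"
  define PS where "PS = {p :: complex poly. degree p \<le> 6 \<and> (\<forall>j. coeff p j \<in> B)}"
  have finB: "finite B" by (simp add: B_def)
  have finPS: "finite PS"
  proof (rule inj_on_finite[where f = "\<lambda>p. restrict (coeff p) {..6}"])
    show "inj_on (\<lambda>p. restrict (coeff p) {..6}) PS"
    proof (rule inj_onI)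
      fix p q assume p: "p \<in> PS" and q: "q \<in> PS" and eq: "restrict (coeff p) {..6} = restrict (coeff q) {..6}"
      show "p = q"
      proof (rule poly_eqI)
        fix n show "coeff p n = coeff q n"
        proof (cases "n \<le> 6")
          case True then show ?thesis using fun_cong[OF eq, of n] by simp
        next
          case False
          then have "coeff p n = 0" "coeff q n = 0" using p q by (auto simp: PS_def intro!: coeff_eq_0)
          then show ?thesis by simp
        qed
      qed
    qed
    show "(\<lambda>p. restrict (coeff p) {..6}) ` PS \<subseteq> PiE {..6} (\<lambda>_. B)"
    proof (rule image_subsetI)
      fix p assume "p \<in> PS"
      then show "restrict (coeff p) {..6} \<in> PiE {..6} (\<lambda>_. B)" by (simp add: PS_def restrict_PiE_iff)
    qed
    show "finite (PiE {..6::nat} (\<lambda>_. B))" by (rule finite_PiE) (auto simp: finB)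
  qed
  define R where "R = (\<Union>p\<in>PS - {0}. {z. poly p z = 0})"
  have finR: "finite R" unfolding R_def using finPS by (auto intro!: poly_roots_finite)
  have x0: "x \<noteq> 0" using abs1[of 0] by auto
  have inR: "x ^ n \<in> R" for n
  proof -
    define y where "y = x ^ n"
    have y: "y \<in> F" using sf_power[OF sf x] by (simp add: y_def)
    have yai: "algebraic_integer y" using algint_power[OF ai] by (simp add: y_def)
    have yabs: "cmod ((\<tau> ^^ k) y) = 1" if "k < 6" for k
      using abs1[OF that] by (simp add: y_def emb_power[OF sf emb_k x] norm_power)
    have "CP \<tau> y \<in> PS"
      unfolding PS_def
    proof (intro CollectI conjI allI)
      show "degree (CP \<tau> y) \<le> 6" unfolding CP_def using prod_lin_degree[of "{..<6::nat}"] by simp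
      fix j
      have zi: "coeff (CP \<tau> y) j \<in> \<int>" by (rule CP_int[OF y yai])
      then obtain m where m: "coeff (CP \<tau> y) j = of_int m" by (auto elim: Ints_cases)
      have "cmod (coeff (CP \<tau> y) j) \<le> 2 ^ card {..<6::nat}"
        unfolding CP_def by (rule prod_lin_bound) (auto simp: yabs)
      then have "\<bar>m\<bar> \<le> 64" using m by simp
      then have "m \<in> {-64..64}" by (simp add: abs_le_iff)
      then show "coeff (CP \<tau> y) j \<in> B" unfolding m B_def by (rule imageI)
    qed
    moreover have "CP \<tau> y \<noteq> 0"
    proof -
      have "coeff (CP \<tau> y) 6 = 1" using prod_lin_top[of "{..<6::nat}" "\<lambda>k. (\<tau> ^^ k) y"] by (simp add: CP_def)
      then show ?thesis by auto
    qed
    moreover have "poly (CP \<tau> y) y = 0"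
      unfolding CP_def poly_prod by (rule prod_zero) (auto intro!: bexI[of _ 0])
    ultimately show ?thesis unfolding R_def y_def by blast
  qed
  have "\<not> inj (\<lambda>n::nat. x ^ n)"
  proof
    assume "inj (\<lambda>n::nat. x ^ n)"
    then have "finite (UNIV :: nat set)" using inj_on_finite[of "\<lambda>n::nat. x ^ n" UNIV R] finR inR by auto
    then show False by simp
  qed
  then obtain a b :: nat where ab: "a \<noteq> b" "x ^ a = x ^ b" unfolding inj_def by blast
  have "\<exists>n>0. x ^ n = 1"
  proof (cases "a < b")
    case True
    then have "x ^ b = x ^ a * x ^ (b - a)" by (simp add: power_add[symmetric])
    then have "x ^ (b - a) = 1" using ab x0 by simp
    then show ?thesis using True by (intro exI[of _ "b - a"]) simp
  next
    case False
    then have "b < a" using ab by simp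
    then have "x ^ a = x ^ b * x ^ (a - b)" by (simp add: power_add[symmetric])
    then have "x ^ (a - b) = 1" using ab x0 by simp
    then show ?thesis using \<open>b < a\<close> by (intro exI[of _ "a - b"]) simp
  qed
  then show ?thesis using x by (simp add: roots_of_unity_def)
qed

end

definition Dsc :: "int \<Rightarrow> int \<Rightarrow> int" where
  "Dsc t s = t^2*s^2 - 4*s^3 - 4*t^3 + 18*t*s - 27"

definition qr :: "int \<Rightarrow> bool" where
  "qr d = (d mod 128 \<in> set [0, 1, 4, 9, 16, 17, 25, 33, 36, 41, 49, 57, 64, 65, 68, 73, 81, 89, 97, 100, 105, 113, 121]
    \<and> d mod 9 \<in> set [0,1,4,7] \<and> d mod 5 \<in> set [0,1,4] \<and> d mod 7 \<in> set [0,1,2,4]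
    \<and> d mod 23 \<in> set [0, 1, 2, 3, 4, 6, 8, 9, 12, 13, 16, 18] \<and> d mod 17 \<in> set [0, 1, 2, 4, 8, 9, 13, 15, 16]
    \<and> d mod 13 \<in> set [0, 1, 3, 4, 9, 10, 12])"

definition chk :: bool where
  "chk = (\<forall>t\<in>set [0..19]. \<forall>s\<in>set [0..((2*t+1)^2 div 6)].
     0 < Dsc (2*t+1) (2*s+1) \<longrightarrow> (t = 9 \<and> s = 41) \<or> \<not> qr (Dsc (2*t+1) (2*s+1)))"

lemma chk_true: chk by code_simp

lemma sqmod:
  assumes "\<forall>r\<in>set [0..m-1]. r^2 mod m \<in> set L" "(m::int) > 0"
  shows "x^2 mod m \<in> set L"
proof -
  have "x mod m \<in> set [0..m-1]" using assms(2) by simp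
  then have "(x mod m)^2 mod m \<in> set L" using assms(1) by blast
  then show ?thesis by (simp add: power_mod)
qed

lemma qr_sq: "qr (x^2)"
  unfolding qr_def
  by (intro conjI; rule sqmod; code_simp)

lemma final_check:
  fixes T S \<Delta> :: int
  assumes "odd T" "odd S" "1 \<le> T" "T \<le> 40" "1 \<le> S" "3 * S \<le> T^2" "\<Delta>^2 = Dsc T S" "\<Delta> \<noteq> 0"
  shows "T = 19 \<and> S = 83"
proof -
  obtain t where t: "T = 2 * t + 1" using assms(1) by (metis oddE)
  obtain s where s: "S = 2 * s + 1" using assms(2) by (metis oddE)
  have t0: "t \<in> set [0..19]" using t assms(3,4) by simp
  have "6 * s \<le> (2*t+1)^2 - 3" using assms(6) s t by simp
  then have "s \<le> (2*t+1)^2 div 6" by linarith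
  moreover have "0 \<le> s" using s assms(5) by simp
  ultimately have s0: "s \<in> set [0..((2*t+1)^2 div 6)]" by simp
  have pos: "0 < Dsc (2*t+1) (2*s+1)" using assms(7,8) s t by (metis power2_less_0 zero_less_power2 not_less_iff_gr_or_eq)
  have "qr (Dsc (2*t+1) (2*s+1))" using qr_sq[of \<Delta>] assms(7) s t by simp
  then have "t = 9 \<and> s = 41" using chk_true t0 s0 pos unfolding chk_def by blast
  then show ?thesis using s t by simp
qed

lemma ideal2:
  assumes pi: "prime_ideal_in R P" and nm: "ideal_norm R P = 2" and R0: "0 \<in> R" and R1: "1 \<in> R"
  shows "1 \<notin> P" and "\<And>x. x \<in> R \<Longrightarrow> x \<in> P \<or> x - 1 \<in> P"
proof -
  have PR: "P \<subseteq> R" and P0: "0 \<in> P" and Pdiff: "\<And>x y. x \<in> P \<Longrightarrow> y \<in> P \<Longrightarrow> x - y \<in> P"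
    and Pmult: "\<And>r x. r \<in> R \<Longrightarrow> x \<in> P \<Longrightarrow> r * x \<in> P" and PneR: "P \<noteq> R"
    using pi unfolding prime_ideal_in_def by auto
  show n1: "1 \<notin> P"
  proof
    assume "1 \<in> P"
    then have "R \<subseteq> P" using Pmult by (metis mult.right_neutral subsetI)
    then show False using PR PneR by blast
  qed
  define C where "C = (\<lambda>x. (\<lambda>y. x + y) ` P) ` R"
  have cC: "card C = 2" using nm by (simp add: ideal_norm_def C_def)
  then have finC: "finite C" by (metis card.infinite zero_neq_numeral)
  define Q1 where "Q1 = (\<lambda>y. 1 + y) ` P"
  have PC: "P \<in> C" unfolding C_def using R0 by (intro image_eqI[of _ _ 0]) auto
  have QC: "Q1 \<in> C" unfolding C_def Q1_def using R1 by blast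
  have PQ: "P \<noteq> Q1"
  proof
    assume "P = Q1"
    then have "0 \<in> Q1" using P0 by simp
    then obtain p where p: "p \<in> P" "0 = 1 + p" unfolding Q1_def by blast
    then have "1 = 0 - p" by (simp add: eq_neg_iff_add_eq_0 add.commute)
    then have "1 \<in> P" using Pdiff[OF P0 p(1)] by simp
    then show False using n1 by simp
  qed
  have sub: "{P, Q1} \<subseteq> C" using PC QC by simp
  have cd: "card {P, Q1} = card C" using PQ cC by simp
  have CPQ: "C = {P, Q1}" using card_subset_eq[OF finC sub cd] by simp
  fix x assume x: "x \<in> R"
  have X: "(\<lambda>y. x + y) ` P \<in> C" unfolding C_def using x by blast
  have xX: "x \<in> (\<lambda>y. x + y) ` P" using P0 by (intro image_eqI[of _ _ 0]) auto
  show "x \<in> P \<or> x - 1 \<in> P"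
  proof (cases "(\<lambda>y. x + y) ` P = P")
    case True then show ?thesis using xX by simp
  next
    case False
    then have "(\<lambda>y. x + y) ` P = Q1" using X CPQ by blast
    then have "x \<in> Q1" using xX by simp
    then obtain p where "p \<in> P" "x = 1 + p" unfolding Q1_def by blast
    then show ?thesis by simp
  qed
qed

lemma disc_identity:
  fixes a b c :: real
  shows "((a-b)*(b-c)*(c-a))^2 = (a+b+c)^2*(a*b+b*c+c*a)^2 - 4*(a*b+b*c+c*a)^3 - 4*(a+b+c)^3*(a*b*c)
          + 18*(a+b+c)*(a*b+b*c+c*a)*(a*b*c) - 27*(a*b*c)^2"
  by (simp add: power2_eq_square power3_eq_cube algebra_simps)

lemma sym_ineq:
  fixes a b c :: real
  shows "3 * (a*b+b*c+c*a) \<le> (a+b+c)^2"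
proof -
  have "0 \<le> (a-b)^2 + (b-c)^2 + (c-a)^2" by simp
  then show ?thesis by (simp add: power2_eq_square algebra_simps)
qed

lemma odd_notin:
  assumes pi: "prime_ideal_in R P" and n1: "1 \<notin> P" and two: "2 \<in> P"
    and Rint: "\<And>k. of_int k \<in> R" and "odd n"
  shows "of_int n \<notin> P"
proof
  assume nP: "of_int n \<in> P"
  obtain k where k: "n = 2 * k + 1" using assms(5) by (metis oddE)
  have "of_int k * 2 \<in> P" using pi Rint two unfolding prime_ideal_in_def by blast
  then have "of_int n - of_int k * 2 \<in> P" using pi nP unfolding prime_ideal_in_def by blast
  then have "1 \<in> P" using k by simp
  then show False using n1 by simp
qed

context sext begin

definition RK where "RK = ring_of_integers (F \<inter> \<real>)"

lemma RK_iff: "x \<in> RK \<longleftrightarrow> x \<in> F \<and> x \<in> \<real> \<and> algebraic_integer x"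
  by (auto simp: RK_def ring_of_integers_def)

lemma RK_add: "x \<in> RK \<Longrightarrow> y \<in> RK \<Longrightarrow> x + y \<in> RK"
  by (auto simp: RK_iff sf_add[OF sf] algint_add)
lemma RK_diff: "x \<in> RK \<Longrightarrow> y \<in> RK \<Longrightarrow> x - y \<in> RK"
  by (auto simp: RK_iff sf_diff[OF sf] algint_diff)
lemma RK_mult: "x \<in> RK \<Longrightarrow> y \<in> RK \<Longrightarrow> x * y \<in> RK"
  by (auto simp: RK_iff sf_mult[OF sf] algint_mult)
lemma RK_of_int: "of_int k \<in> RK"
  by (auto simp: RK_iff sf_of_int[OF sf] algint_of_int)
lemma RK_0: "0 \<in> RK" using RK_of_int[of 0] by simp
lemma RK_1: "1 \<in> RK" using RK_of_int[of 1] by simp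

end

context sext begin

lemma main:
  assumes Pex: "\<exists>P. prime_ideal_in RK P \<and> ideal_norm RK P = 2"
    and eu: "\<epsilon> \<in> units_of_integers F"
    and sq: "sqnorm \<tau> \<epsilon> < 81"
  shows "\<epsilon> \<in> roots_of_unity F"
proof -
  obtain P where pi: "prime_ideal_in RK P" and nm: "ideal_norm RK P = 2" using Pex by blast
  have n1: "1 \<notin> P" and dich: "\<And>x. x \<in> RK \<Longrightarrow> x \<in> P \<or> x - 1 \<in> P"
    using ideal2[OF pi nm RK_0 RK_1] by auto
  have Padd: "\<And>x y. x \<in> P \<Longrightarrow> y \<in> P \<Longrightarrow> x + y \<in> P"
    and Pmult: "\<And>r x. r \<in> RK \<Longrightarrow> x \<in> P \<Longrightarrow> r * x \<in> P"
    using pi unfolding prime_ideal_in_def by auto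
  have unitP: "x - 1 \<in> P" if "x \<in> RK" "y \<in> RK" "x * y = 1" for x y
  proof -
    have "x \<notin> P"
    proof
      assume "x \<in> P"
      then have "y * x \<in> P" using Pmult that by blast
      then show False using n1 that by (simp add: mult.commute)
    qed
    then show ?thesis using dich that by blast
  qed
  have two: "2 \<in> P" using dich[OF RK_of_int[of 2]] n1 by auto
  have oddn: "of_int n \<notin> P" if "odd n" for n
    by (rule odd_notin[OF pi n1 two RK_of_int that])

  have eF: "\<epsilon> \<in> F" and eai: "algebraic_integer \<epsilon>" and e0: "\<epsilon> \<noteq> 0"
    and eiF: "inverse \<epsilon> \<in> F" and eiai: "algebraic_integer (inverse \<epsilon>)"
    using eu by (auto simp: units_of_integers_def ring_of_integers_def)
  define z where "z k = (\<tau> ^^ k) \<epsilon>" for k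
  have zF: "z k \<in> F" for k unfolding z_def by (rule taukF[OF eF])
  have zai: "algebraic_integer (z k)" for k unfolding z_def by (rule emb_algint[OF sf emb_k eF eai])
  have z0: "z k \<noteq> 0" for k unfolding z_def by (rule emb_nonzero[OF sf emb_k eF e0])
  have ziai: "algebraic_integer (inverse (z k))" for k
    using emb_algint[OF sf emb_k eiF eiai, of k] emb_inverse[OF sf emb_k eF, of k] by (simp add: z_def)
  have z3: "z (k + 3) = cnj (z k)" for k
  proof -
    have "cnj (z k) = (\<tau> ^^ 3) ((\<tau> ^^ k) \<epsilon>)" using cnj_tau3[OF zF[of k]] by (simp add: z_def)
    also have "\<dots> = (\<tau> ^^ (k + 3)) \<epsilon>" by (metis add.commute comp_apply funpow_add)
    finally show ?thesis by (simp add: z_def)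
  qed
  have z6: "z (k + 6) = z k" for k
  proof -
    have "z (k + 6) = (\<tau> ^^ k) ((\<tau> ^^ 6) \<epsilon>)" by (simp add: z_def funpow_add)
    then show ?thesis using tau6[OF eF] by (simp add: z_def)
  qed
  define u where "u = \<epsilon> * cnj \<epsilon>"
  define v where "v i = (\<tau> ^^ i) u" for i
  have uF: "u \<in> F" unfolding u_def using cnj_tau3[OF eF] taukF[OF eF] sf_mult[OF sf eF] by simp
  have vF: "v i \<in> F" for i unfolding v_def by (rule taukF[OF uF])
  have v_eq: "v i = z i * z (i + 3)" for i
  proof -
    have "u = \<epsilon> * (\<tau> ^^ 3) \<epsilon>" unfolding u_def using cnj_tau3[OF eF] by simp
    then have "v i = (\<tau> ^^ i) \<epsilon> * (\<tau> ^^ i) ((\<tau> ^^ 3) \<epsilon>)"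
      unfolding v_def using tk_mult[OF eF taukF[OF eF]] by simp
    also have "\<dots> = z i * z (i + 3)" by (simp add: z_def funpow_add)
    finally show ?thesis .
  qed
  define r where "r i = (cmod (z i))^2" for i
  have r_pos: "r i > 0" for i unfolding r_def using z0 by simp
  have v_r: "v i = of_real (r i)" for i unfolding r_def v_eq z3 complex_norm_square by simp
  have v_succ: "\<tau> (v i) = v (Suc i)" for i by (simp add: v_def)
  have vs: "\<tau> (v 0) = v 1" "\<tau> (v 1) = v 2" "\<tau> (v 2) = v 3" unfolding v_def by (simp_all add: eval_nat_numeral)
  have v3: "v 3 = v 0" using v_eq[of 3] v_eq[of 0] z6[of 0] by (simp add: mult.commute)
  have vai: "algebraic_integer (v i)" for i unfolding v_eq by (rule algint_mult[OF zai zai])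
  have viai: "algebraic_integer (inverse (v i))" for i
    unfolding v_eq by (simp add: algint_mult[OF ziai ziai])
  have vRK: "v i \<in> RK" for i using vF vai v_r by (simp add: RK_iff)
  have viRK: "inverse (v i) \<in> RK" for i
    using vF viai v_r sf_inverse[OF sf] by (simp add: RK_iff)
  have v0: "v i \<noteq> 0" for i using r_pos[of i] v_r[of i] by auto
  have vunit: "v i * inverse (v i) = 1" for i using v0 by simp
  have tauF: "\<And>x. x \<in> F \<Longrightarrow> \<tau> x \<in> F" by (rule tauF)
  note eadd = emb_add[OF sf emb_tau] and emult = emb_mult[OF sf emb_tau] and ediff = emb_diff[OF sf emb_tau]
  note sadd = sf_add[OF sf] and smult = sf_mult[OF sf] and sdiff = sf_diff[OF sf]

  define t where "t = v 0 + v 1 + v 2"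
  define s where "s = v 0 * v 1 + v 1 * v 2 + v 2 * v 0"
  define N where "N = v 0 * v 1 * v 2"
  define \<delta> where "\<delta> = (v 0 - v 1) * (v 1 - v 2) * (v 2 - v 0)"
  have tF: "t \<in> F" "s \<in> F" "N \<in> F" "\<delta> \<in> F" unfolding t_def s_def N_def \<delta>_def
    by (simp_all add: vF sadd smult sdiff)
  have "\<tau> t = \<tau> (v 0) + \<tau> (v 1) + \<tau> (v 2)" unfolding t_def by (simp only: eadd vF sadd)
  also have "\<dots> = v 1 + v 2 + v 3" by (simp only: vs)
  finally have tinv: "\<tau> t = t" using v3 by (simp add: t_def add_ac)
  have "\<tau> s = \<tau> (v 0) * \<tau> (v 1) + \<tau> (v 1) * \<tau> (v 2) + \<tau> (v 2) * \<tau> (v 0)"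
    unfolding s_def by (simp only: eadd emult vF sadd smult)
  also have "\<dots> = v 1 * v 2 + v 2 * v 3 + v 3 * v 1" by (simp only: vs)
  finally have sinv: "\<tau> s = s" using v3 by (simp add: s_def add_ac mult_ac)
  have "\<tau> N = \<tau> (v 0) * \<tau> (v 1) * \<tau> (v 2)" unfolding N_def by (simp only: emult vF smult)
  also have "\<dots> = v 1 * v 2 * v 3" by (simp only: vs)
  finally have Ninv: "\<tau> N = N" using v3 by (simp add: N_def mult_ac)
  have "\<tau> \<delta> = (\<tau> (v 0) - \<tau> (v 1)) * (\<tau> (v 1) - \<tau> (v 2)) * (\<tau> (v 2) - \<tau> (v 0))"
    unfolding \<delta>_def by (simp only: ediff emult vF sdiff smult)
  also have "\<dots> = (v 1 - v 2) * (v 2 - v 3) * (v 3 - v 1)" by (simp only: vs)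
  finally have dinv: "\<tau> \<delta> = \<delta>" using v3 by (simp add: \<delta>_def mult_ac)
  have tai: "algebraic_integer t" "algebraic_integer s" "algebraic_integer N" "algebraic_integer \<delta>"
    unfolding t_def s_def N_def \<delta>_def by (simp_all add: vai algint_add algint_mult algint_diff)
  have tZ: "t \<in> \<int>" using rat_algint[OF INV[OF tF(1) tinv] tai(1)] .
  have sZ: "s \<in> \<int>" using rat_algint[OF INV[OF tF(2) sinv] tai(2)] .
  have NQ: "N \<in> \<rat>" using INV[OF tF(3) Ninv] .
  have NZ: "N \<in> \<int>" using rat_algint[OF NQ tai(3)] .
  have dZ: "\<delta> \<in> \<int>" using rat_algint[OF INV[OF tF(4) dinv] tai(4)] .
  have NiZ: "inverse N \<in> \<int>"
  proof (rule rat_algint)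
    show "inverse N \<in> \<rat>" using NQ by simp
    have "inverse N = inverse (v 0) * inverse (v 1) * inverse (v 2)" by (simp add: N_def)
    then show "algebraic_integer (inverse N)" by (simp add: viai algint_mult)
  qed
  obtain T where T: "t = of_int T" using tZ by (auto elim: Ints_cases)
  obtain S where S: "s = of_int S" using sZ by (auto elim: Ints_cases)
  obtain n where n: "N = of_int n" using NZ by (auto elim: Ints_cases)
  obtain n' where n': "inverse N = of_int n'" using NiZ by (auto elim: Ints_cases)
  obtain \<Delta> where \<Delta>: "\<delta> = of_int \<Delta>" using dZ by (auto elim: Ints_cases)
  have Tr: "real_of_int T = r 0 + r 1 + r 2"
  proof -
    have "complex_of_real (real_of_int T) = complex_of_real (r 0 + r 1 + r 2)" using T by (simp add: t_def v_r)
    then show ?thesis by (simp only: of_real_eq_iff)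
  qed
  have Sr: "real_of_int S = r 0 * r 1 + r 1 * r 2 + r 2 * r 0"
  proof -
    have "complex_of_real (real_of_int S) = complex_of_real (r 0 * r 1 + r 1 * r 2 + r 2 * r 0)" using S by (simp add: s_def v_r)
    then show ?thesis by (simp only: of_real_eq_iff)
  qed
  have Nr: "real_of_int n = r 0 * r 1 * r 2"
  proof -
    have "complex_of_real (real_of_int n) = complex_of_real (r 0 * r 1 * r 2)" using n by (simp add: N_def v_r)
    then show ?thesis by (simp only: of_real_eq_iff)
  qed
  have \<Delta>r: "real_of_int \<Delta> = (r 0 - r 1) * (r 1 - r 2) * (r 2 - r 0)"
  proof -
    have "complex_of_real (real_of_int \<Delta>) = complex_of_real ((r 0 - r 1) * (r 1 - r 2) * (r 2 - r 0))" using \<Delta> by (simp add: \<delta>_def v_r)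
    then show ?thesis by (simp only: of_real_eq_iff)
  qed
  have npos: "n > 0"
  proof -
    have "real_of_int n > 0" using Nr r_pos by simp
    then show ?thesis by simp
  qed
  have N0: "N \<noteq> 0" unfolding N_def using v0[of 0] v0[of 1] v0[of 2] by simp
  have "N * inverse N = 1" using N0 by simp
  then have "n * n' = 1" using n n' by (metis of_int_1 of_int_eq_iff of_int_mult)
  then have n1': "n = 1" using npos by (metis pos_zmult_eq_1_iff)
  have prod1: "r 0 * r 1 * r 2 = 1" using Nr n1' by simp
  have sum3: "(\<Sum>i<(3::nat). f i) = f 0 + f 1 + f 2" for f :: "nat \<Rightarrow> real"
    by (simp add: numeral_3_eq_3 numeral_2_eq_2 add.assoc)
  have sqr: "sqnorm \<tau> \<epsilon> = 2 * (r 0 + r 1 + r 2)"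
    unfolding sqnorm_def using sum3[of "\<lambda>i. (cmod ((\<tau> ^^ i) \<epsilon>))\<^sup>2"] by (simp add: r_def z_def)
  have "2 * real_of_int T < 81" using sq unfolding sqr Tr[symmetric] .
  then have "real_of_int T < 41" by linarith
  then have T40: "T \<le> 40" by simp
  have "real_of_int T > 0" using Tr r_pos[of 0] r_pos[of 1] r_pos[of 2] by linarith
  then have T1: "1 \<le> T" by simp
  have S1: "1 \<le> S"
  proof -
    have "real_of_int S > 0" using Sr r_pos[of 0] r_pos[of 1] r_pos[of 2] by (simp add: add_pos_pos)
    then show ?thesis by simp
  qed
  have S3: "3 * S \<le> T^2"
  proof -
    have "real_of_int (3 * S) \<le> real_of_int (T^2)" using sym_ineq[of "r 0" "r 1" "r 2"] Tr Sr by simp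
    then show ?thesis by (simp only: of_int_le_iff)
  qed
  have DD: "\<Delta>^2 = Dsc T S"
  proof -
    have "real_of_int (\<Delta>^2) = real_of_int (Dsc T S)"
      using disc_identity[of "r 0" "r 1" "r 2"] Tr Sr \<Delta>r prod1 by (simp add: Dsc_def)
    then show ?thesis by (simp only: of_int_eq_iff)
  qed
  have vm1: "v i - 1 \<in> P" for i by (rule unitP[OF vRK viRK vunit])
  have vvm1: "v i * v j - 1 \<in> P" for i j
  proof (rule unitP[OF RK_mult[OF vRK vRK] RK_mult[OF viRK viRK]])
    show "v i * v j * (inverse (v i) * inverse (v j)) = 1" using v0[of i] v0[of j] by (simp add: field_simps)
  qed
  have Todd: "odd T"
  proof (rule ccontr)
    assume "\<not> odd T"
    then have o: "odd (T - 3)" by simp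
    have e: "t - 3 = (v 0 - 1) + (v 1 - 1) + (v 2 - 1)" by (simp add: t_def)
    have "(v 0 - 1) + (v 1 - 1) + (v 2 - 1) \<in> P" by (intro Padd vm1)
    then have "t - 3 \<in> P" unfolding e .
    then have "of_int (T - 3) \<in> P" using T by simp
    then show False using oddn[OF o] by simp
  qed
  have Sodd: "odd S"
  proof (rule ccontr)
    assume "\<not> odd S"
    then have o: "odd (S - 3)" by simp
    have e: "s - 3 = (v 0 * v 1 - 1) + (v 1 * v 2 - 1) + (v 2 * v 0 - 1)" by (simp add: s_def)
    have "(v 0 * v 1 - 1) + (v 1 * v 2 - 1) + (v 2 * v 0 - 1) \<in> P" by (intro Padd vvm1)
    then have "s - 3 \<in> P" unfolding e .
    then have "of_int (S - 3) \<in> P" using S by simp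
    then show False using oddn[OF o] by simp
  qed
  show ?thesis
  proof (cases "\<Delta> = 0")
    case True
    then have "(r 0 - r 1) * (r 1 - r 2) * (r 2 - r 0) = 0" using \<Delta>r by simp
    then have "r 0 = r 1 \<or> r 1 = r 2 \<or> r 2 = r 0" by auto
    then have "v 0 = v 1 \<or> v 1 = v 2 \<or> v 2 = v 0" using v_r by auto
    moreover have c1: "v 1 = v 2" if "v 0 = v 1" using that vs by metis
    moreover have c2: "v 2 = v 0" if "v 1 = v 2" using that vs v3 by metis
    moreover have c3: "v 0 = v 1" if "v 2 = v 0" using that vs v3 by metis
    ultimately have "v 0 = v 1 \<and> v 1 = v 2" by blast
    then have req: "r 0 = r 1" "r 1 = r 2" using v_r by (metis of_real_eq_iff)+
    then have r03: "r 0 ^ 3 = 1 ^ 3" using prod1 by (simp add: power3_eq_cube)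
    have r0: "r 0 = 1" by (rule power_eq_imp_eq_base[OF r03]) (use r_pos[of 0] in auto)
    have rall: "r i = 1" if "i < 3" for i
    proof -
      have "i = 0 \<or> i = 1 \<or> i = 2" using that by auto
      then show ?thesis using r0 req by auto
    qed
    have c3: "cmod (z i) = 1" if "i < 3" for i
    proof -
      have "cmod (z i) ^ 2 = 1 ^ 2" using rall[OF that] by (simp add: r_def)
      then show ?thesis by (rule power_eq_imp_eq_base) auto
    qed
    have c6: "cmod ((\<tau> ^^ k) \<epsilon>) = 1" if "k < 6" for k
    proof (cases "k < 3")
      case True then show ?thesis using c3 by (simp add: z_def)
    next
      case False
      then have "k = (k - 3) + 3" by simp
      then have "z k = cnj (z (k - 3))" using z3[of "k - 3"] by simp
      then show ?thesis using c3[of "k - 3"] that by (simp add: z_def)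
    qed
    show ?thesis by (rule kronecker[OF eF eai c6])
  next
    case False
    have "T = 19 \<and> S = 83" by (rule final_check[OF Todd Sodd T1 T40 S1 S3 DD False])
    then have t19: "t = 19" and s83: "s = 83" using T S by auto
    have N1: "N = 1" using n n1' by simp
    have cub0: "v 0 ^ 3 - t * v 0 ^ 2 + s * v 0 - N = 0"
      by (simp add: t_def s_def N_def power2_eq_square power3_eq_cube algebra_simps)
    then have cub: "v 0 ^ 3 - 19 * v 0 ^ 2 + 83 * v 0 - 1 = 0" using t19 s83 N1 by simp
    define \<theta> where "\<theta> = (5 - v 0) / 4"
    have "\<theta> ^ 3 + \<theta> ^ 2 - 2 * \<theta> - 1 = - (v 0 ^ 3 - 19 * v 0 ^ 2 + 83 * v 0 - 1) / 64"
      unfolding \<theta>_def by (simp add: field_simps power2_eq_square power3_eq_cube)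
    then have thc: "\<theta> ^ 3 + \<theta> ^ 2 - 2 * \<theta> - 1 = 0" using cub by simp
    have thF: "\<theta> \<in> F" unfolding \<theta>_def
      using sf_divide[OF sf sf_diff[OF sf sf_of_int[OF sf, of 5] vF[of 0]] sf_of_int[OF sf, of 4]] by simp
    have thR: "\<theta> \<in> \<real>" unfolding \<theta>_def v_r by simp
    have thai: "algebraic_integer \<theta>"
      unfolding algebraic_integer_def
    proof (intro exI[of _ "[:-1, -2, 1, 1:]"] conjI)
      show "lead_coeff [:-1, -2, 1, 1::int:] = 1" by simp
      show "poly (map_poly of_int [:-1, -2, 1, 1::int:]) \<theta> = 0"
        using thc by (simp add: power2_eq_square power3_eq_cube algebra_simps)
    qed
    have thRK: "\<theta> \<in> RK" using thF thR thai by (simp add: RK_iff)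
    have sq2: "\<theta> * \<theta> \<in> RK" by (rule RK_mult[OF thRK thRK])
    show ?thesis
    proof (cases "\<theta> \<in> P")
      case True
      have a: "\<theta> * \<theta> + \<theta> - 2 \<in> RK" using RK_diff[OF RK_add[OF sq2 thRK] RK_of_int[of 2]] by simp
      have "(\<theta> * \<theta> + \<theta> - 2) * \<theta> = 1" using thc by (simp add: power2_eq_square power3_eq_cube algebra_simps)
      then have "1 \<in> P" using Pmult[OF a True] by simp
      then show ?thesis using n1 by simp
    next
      case False
      then have p: "\<theta> - 1 \<in> P" using dich[OF thRK] by blast
      have a: "\<theta> * \<theta> + 2 * \<theta> \<in> RK" using RK_add[OF sq2 RK_mult[OF RK_of_int[of 2] thRK]] by simp
      have "(\<theta> * \<theta> + 2 * \<theta>) * (\<theta> - 1) = 1" using thc by (simp add: power2_eq_square power3_eq_cube algebra_simps)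
      then have "1 \<in> P" using Pmult[OF a p] by simp
      then show ?thesis using n1 by simp
    qed
  qed
qed

end

theorem lemma4p1:
  fixes F :: "complex set" and \<tau> :: "complex \<Rightarrow> complex" and \<epsilon> :: complex
  assumes "cyclic_sextic F \<tau>"
    and "totally_imaginary F"
    and "\<exists>P. prime_ideal_in (ring_of_integers (F \<inter> \<real>)) P
              \<and> ideal_norm (ring_of_integers (F \<inter> \<real>)) P = 2"
    and "\<epsilon> \<in> units_of_integers F"
    and "sqnorm \<tau> \<epsilon> < 81"
  shows "\<epsilon> \<in> roots_of_unity F"
proof -
  interpret sext F \<tau> by unfold_locales (rule assms(1), rule assms(2))
  have "\<exists>P. prime_ideal_in RK P \<and> ideal_norm RK P = 2" using assms(3) by (simp add: RK_def)
  then show ?thesis by (rule main[OF _ assms(4) assms(5)])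
qed

end
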